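(* Let $K$ be a field and $X$ a finite connected poset. The center $Z$ of the Lie algebra $(J(I(X,K)),[\ ,\ ])$ is $$Z=\mathrm{span}_K\{e_{xy}: x<y,\ x\text{ is minimal in }X\text{ and } y \text{ is maximal in }X\}.$$
   Context: $I(X,K)$ is the incidence algebra: functions $f:X\times X\to K$ with $f(x,y)=0$ unless $x\le y$, product $(fg)(x,y)=\sum_{x\le t\le y}f(x,t)g(t,y)$; $e_{xy}$ ($x\le y$) is the function equal to $1$ at $(x,y)$ and $0$ elsewhere. $J(I(X,K))=\mathrm{span}_K\{e_{xy}:x<y\}$ is the Jacobson radical, and $[f,g]=fg-gf$. Connected means any two elements are joined by a sequence in which consecutive elements are in a covering relation. *)

theory Defs
  imports Main
begin

text \<open>A poset is a finite carrier set X of a type with a partial order;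
  elements of the incidence algebra I(X,K) are functions X x X -> K,
  represented as functions 'a => 'a => 'k vanishing outside {(x,y). x,y in X, x <= y}.\<close>

definition unit_fn :: "'a \<times> 'a \<Rightarrow> 'a \<Rightarrow> 'a \<Rightarrow> 'k::field" where
  "unit_fn p = (\<lambda>u v. if (u, v) = p then 1 else 0)"

definition K_span :: "('a \<times> 'a) set \<Rightarrow> ('a \<Rightarrow> 'a \<Rightarrow> 'k::field) set" where
  "K_span S = {f. \<exists>c :: 'a \<times> 'a \<Rightarrow> 'k. f = (\<lambda>u v. \<Sum>p\<in>S. c p * unit_fn p u v)}"

definition inc_mult :: "'a::order set \<Rightarrow> ('a \<Rightarrow> 'a \<Rightarrow> 'k::field) \<Rightarrow> ('a \<Rightarrow> 'a \<Rightarrow> 'k) \<Rightarrow> 'a \<Rightarrow> 'a \<Rightarrow> 'k" where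
  "inc_mult X f g = (\<lambda>x y. if x \<in> X \<and> y \<in> X \<and> x \<le> y
      then (\<Sum>t\<in>{t\<in>X. x \<le> t \<and> t \<le> y}. f x t * g t y) else 0)"

definition inc_bracket :: "'a::order set \<Rightarrow> ('a \<Rightarrow> 'a \<Rightarrow> 'k::field) \<Rightarrow> ('a \<Rightarrow> 'a \<Rightarrow> 'k) \<Rightarrow> 'a \<Rightarrow> 'a \<Rightarrow> 'k" where
  "inc_bracket X f g = (\<lambda>x y. inc_mult X f g x y - inc_mult X g f x y)"

definition jacobson_rad :: "'a::order set \<Rightarrow> ('a \<Rightarrow> 'a \<Rightarrow> 'k::field) set" where
  "jacobson_rad X = K_span {(x, y). x \<in> X \<and> y \<in> X \<and> x < y}"

definition lie_center :: "'a::order set \<Rightarrow> ('a \<Rightarrow> 'a \<Rightarrow> 'k::field) set" where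
  "lie_center X = {f \<in> jacobson_rad X. \<forall>g \<in> jacobson_rad X. inc_bracket X f g = (\<lambda>_ _. 0)}"

definition minimal_in :: "'a::order set \<Rightarrow> 'a \<Rightarrow> bool" where
  "minimal_in X x \<longleftrightarrow> x \<in> X \<and> \<not> (\<exists>z\<in>X. z < x)"

definition maximal_in :: "'a::order set \<Rightarrow> 'a \<Rightarrow> bool" where
  "maximal_in X x \<longleftrightarrow> x \<in> X \<and> \<not> (\<exists>z\<in>X. x < z)"

definition covers_in :: "'a::order set \<Rightarrow> 'a \<Rightarrow> 'a \<Rightarrow> bool" where
  "covers_in X x y \<longleftrightarrow> x \<in> X \<and> y \<in> X \<and> x < y \<and> \<not> (\<exists>z\<in>X. x < z \<and> z < y)"

definition connected_poset :: "'a::order set \<Rightarrow> bool" where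
  "connected_poset X \<longleftrightarrow> (\<forall>x\<in>X. \<forall>y\<in>X.
     (\<lambda>a b. covers_in X a b \<or> covers_in X b a)\<^sup>*\<^sup>* x y)"

end

theory Submission
  imports Defs
begin

lemma K_span_finite:
  assumes "finite S"
  shows "(K_span S :: ('a \<Rightarrow> 'a \<Rightarrow> 'k::field) set) = {f. \<forall>u v. (u, v) \<notin> S \<longrightarrow> f u v = 0}"
proof (intro set_eqI iffI)
  fix f :: "'a \<Rightarrow> 'a \<Rightarrow> 'k"
  assume "f \<in> K_span S"
  then obtain c where c: "f = (\<lambda>u v. \<Sum>p\<in>S. c p * unit_fn p u v)"
    unfolding K_span_def by blast
  show "f \<in> {f. \<forall>u v. (u, v) \<notin> S \<longrightarrow> f u v = 0}"
  proof (clarsimp)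
    fix u v assume "(u, v) \<notin> S"
    then show "f u v = 0" unfolding c unit_fn_def
      by (intro sum.neutral) auto
  qed
next
  fix f :: "'a \<Rightarrow> 'a \<Rightarrow> 'k"
  assume f: "f \<in> {f. \<forall>u v. (u, v) \<notin> S \<longrightarrow> f u v = 0}"
  have "f = (\<lambda>u v. \<Sum>p\<in>S. (case p of (a, b) \<Rightarrow> f a b) * unit_fn p u v)"
  proof (intro ext)
    fix u v
    have "(\<Sum>p\<in>S. (case p of (a, b) \<Rightarrow> f a b) * unit_fn p u v)
        = (\<Sum>p\<in>S. if p = (u, v) then f u v else 0)"
      unfolding unit_fn_def by (intro sum.cong) auto
    also have "\<dots> = (if (u, v) \<in> S then f u v else 0)"
      using assms by (simp add: sum.delta')
    also have "\<dots> = f u v" using f by auto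
    finally show "f u v = (\<Sum>p\<in>S. (case p of (a, b) \<Rightarrow> f a b) * unit_fn p u v)" by simp
  qed
  then show "f \<in> K_span S" unfolding K_span_def by blast
qed

theorem proposition2p5:
  fixes X :: "'a::order set"
  assumes "finite X" and "connected_poset X"
  shows "(lie_center X :: ('a \<Rightarrow> 'a \<Rightarrow> 'k::field) set) =
         K_span {(x, y). x < y \<and> minimal_in X x \<and> maximal_in X y}"
proof -
  have fS1: "finite {(x, y). x \<in> X \<and> y \<in> X \<and> x < y}"
    by (rule finite_subset[of _ "X \<times> X"]) (use assms(1) in auto)
  have fS2: "finite {(x, y). x < y \<and> minimal_in X x \<and> maximal_in X y}"
    by (rule finite_subset[of _ "X \<times> X"]) (use assms(1) in \<open>auto simp: minimal_in_def maximal_in_def\<close>)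
  have J: "(jacobson_rad X :: ('a \<Rightarrow> 'a \<Rightarrow> 'k) set) = {f. \<forall>u v. f u v \<noteq> 0 \<longrightarrow> u \<in> X \<and> v \<in> X \<and> u < v}"
    unfolding jacobson_rad_def K_span_finite[OF fS1] by auto
  have R: "(K_span {(x, y). x < y \<and> minimal_in X x \<and> maximal_in X y} :: ('a \<Rightarrow> 'a \<Rightarrow> 'k) set)
      = {f. \<forall>u v. f u v \<noteq> 0 \<longrightarrow> u < v \<and> minimal_in X u \<and> maximal_in X v}"
    unfolding K_span_finite[OF fS2] by auto
  have fI: "\<And>a b. finite {t\<in>X. a \<le> t \<and> t \<le> b}" using assms(1) by auto
  show ?thesis unfolding R
  proof (intro set_eqI iffI)
    fix f :: "'a \<Rightarrow> 'a \<Rightarrow> 'k"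
    assume fc: "f \<in> lie_center X"
    then have fJ: "\<And>u v. f u v \<noteq> 0 \<Longrightarrow> u \<in> X \<and> v \<in> X \<and> u < v"
      unfolding lie_center_def J by auto
    have comm: "\<And>g. g \<in> jacobson_rad X \<Longrightarrow> inc_bracket X f g = (\<lambda>_ _. 0)"
      using fc unfolding lie_center_def by auto
    show "f \<in> {f. \<forall>u v. f u v \<noteq> 0 \<longrightarrow> u < v \<and> minimal_in X u \<and> maximal_in X v}"
    proof (clarify)
      fix u v assume nz: "f u v \<noteq> 0"
      from fJ[OF nz] have uX: "u \<in> X" and vX: "v \<in> X" and uv: "u < v" by auto
      have maxv: "maximal_in X v"
      proof (rule ccontr)
        assume "\<not> maximal_in X v"
        then obtain w where wX: "w \<in> X" and vw: "v < w" using vX unfolding maximal_in_def by auto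
        define g :: "'a \<Rightarrow> 'a \<Rightarrow> 'k" where "g = unit_fn (v, w)"
        have gJ: "g \<in> jacobson_rad X" unfolding J g_def unit_fn_def using vX wX vw by auto
        have "inc_bracket X f g u w = 0" using comm[OF gJ] by metis
        moreover have "inc_mult X f g u w = f u v"
        proof -
          have "inc_mult X f g u w = (\<Sum>t\<in>{t\<in>X. u \<le> t \<and> t \<le> w}. if t = v then f u v else 0)"
            unfolding inc_mult_def g_def unit_fn_def using uX wX uv vw
            by (auto intro!: sum.cong)
          also have "\<dots> = f u v" using fI vX uv vw by (simp add: sum.delta' less_imp_le)
          finally show ?thesis .
        qed
        moreover have "inc_mult X g f u w = 0"
          unfolding inc_mult_def g_def unit_fn_def using uv by (auto intro!: sum.neutral)
        ultimately show False using nz unfolding inc_bracket_def by simp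
      qed
      have minu: "minimal_in X u"
      proof (rule ccontr)
        assume "\<not> minimal_in X u"
        then obtain w where wX: "w \<in> X" and wu: "w < u" using uX unfolding minimal_in_def by auto
        define g :: "'a \<Rightarrow> 'a \<Rightarrow> 'k" where "g = unit_fn (w, u)"
        have gJ: "g \<in> jacobson_rad X" unfolding J g_def unit_fn_def using uX wX wu by auto
        have "inc_bracket X f g w v = 0" using comm[OF gJ] by metis
        moreover have "inc_mult X g f w v = f u v"
        proof -
          have "inc_mult X g f w v = (\<Sum>t\<in>{t\<in>X. w \<le> t \<and> t \<le> v}. if t = u then f u v else 0)"
            unfolding inc_mult_def g_def unit_fn_def using vX wX uv wu
            by (auto intro!: sum.cong)
          also have "\<dots> = f u v" using fI uX uv wu by (simp add: sum.delta' less_imp_le)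
          finally show ?thesis .
        qed
        moreover have "inc_mult X f g w v = 0"
          unfolding inc_mult_def g_def unit_fn_def using uv by (auto intro!: sum.neutral)
        ultimately show False using nz unfolding inc_bracket_def by simp
      qed
      show "u < v \<and> minimal_in X u \<and> maximal_in X v" using uv minu maxv by auto
    qed
  next
    fix f :: "'a \<Rightarrow> 'a \<Rightarrow> 'k"
    assume "f \<in> {f. \<forall>u v. f u v \<noteq> 0 \<longrightarrow> u < v \<and> minimal_in X u \<and> maximal_in X v}"
    then have fR: "\<And>u v. f u v \<noteq> 0 \<Longrightarrow> u < v \<and> minimal_in X u \<and> maximal_in X v" by auto
    have fJ: "f \<in> jacobson_rad X" unfolding J using fR
      by (auto simp: minimal_in_def maximal_in_def)
    have "inc_bracket X f g = (\<lambda>_ _. 0)" if gJ: "g \<in> jacobson_rad X" for g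
    proof (intro ext)
      fix x y
      have g': "\<And>u v. g u v \<noteq> 0 \<Longrightarrow> u \<in> X \<and> v \<in> X \<and> u < v" using gJ unfolding J by auto
      have t1: "f x t * g t y = 0" for t
      proof (rule ccontr)
        assume "f x t * g t y \<noteq> 0"
        then have "f x t \<noteq> 0" "g t y \<noteq> 0" by auto
        then show False using fR g' unfolding maximal_in_def by blast
      qed
      have t2: "g x t * f t y = 0" for t
      proof (rule ccontr)
        assume "g x t * f t y \<noteq> 0"
        then have "g x t \<noteq> 0" "f t y \<noteq> 0" by auto
        then show False using fR g' unfolding minimal_in_def by blast
      qed
      show "inc_bracket X f g x y = 0"
        unfolding inc_bracket_def inc_mult_def by (simp add: t1 t2)
    qed
    then show "f \<in> lie_center X" unfolding lie_center_def using fJ by auto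
  qed
qed

end
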